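(* Let $M$ be a finite abelian group of exponent greater than $2$. Then $\mathrm{Half}(L_M)\cong C_2\times\mathrm{Aut}(L_M)$.
   Context: Let $K=\{1,a,b,c\}$ be the Klein four-group. Set $L_M=K\times M$ with the operation $(A,x)*(B,y)=(AB,xy)$ if $B=1$, and $(A,x)*(B,y)=(AB,x^{-1}y)$ if $B\neq 1$. $\mathrm{Half}(L_M)$ denotes the group (under composition) of half-automorphisms of $L_M$, i.e. bijections $f$ with $f(XY)\in\{f(X)f(Y),f(Y)f(X)\}$ for all $X,Y$; $\mathrm{Aut}(L_M)$ is the automorphism group; $C_2$ is the cyclic group of order $2$. *)

theory Defs
  imports "HOL-Algebra.Algebra"
begin

definition group_exponent :: "('a, 'b) monoid_scheme \<Rightarrow> nat" where
  "group_exponent G = (LEAST n. 0 < n \<and> (\<forall>x\<in>carrier G. x [^]\<^bsub>G\<^esub> n = \<one>\<^bsub>G\<^esub>))"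

(* Klein four-group K = {1,a,b,c} modelled as bool \<times> bool with componentwise xor;
   identity 1 = (False, False) *)
definition klein_one :: "bool \<times> bool" where
  "klein_one = (False, False)"

definition klein_mult :: "bool \<times> bool \<Rightarrow> bool \<times> bool \<Rightarrow> bool \<times> bool" where
  "klein_mult A B = (fst A \<noteq> fst B, snd A \<noteq> snd B)"

definition LM_carrier :: "('a, 'b) monoid_scheme \<Rightarrow> ((bool \<times> bool) \<times> 'a) set" where
  "LM_carrier M = (UNIV :: (bool \<times> bool) set) \<times> carrier M"

definition LM_mult :: "('a, 'b) monoid_scheme \<Rightarrow> (bool \<times> bool) \<times> 'a \<Rightarrow> (bool \<times> bool) \<times> 'a \<Rightarrow> (bool \<times> bool) \<times> 'a" where
  "LM_mult M P Q =
     (klein_mult (fst P) (fst Q),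
      if fst Q = klein_one then snd P \<otimes>\<^bsub>M\<^esub> snd Q
      else inv\<^bsub>M\<^esub> (snd P) \<otimes>\<^bsub>M\<^esub> snd Q)"

definition is_half_aut_LM :: "('a, 'b) monoid_scheme \<Rightarrow> ((bool \<times> bool) \<times> 'a \<Rightarrow> (bool \<times> bool) \<times> 'a) \<Rightarrow> bool" where
  "is_half_aut_LM M f \<longleftrightarrow>
     bij_betw f (LM_carrier M) (LM_carrier M) \<and>
     (\<forall>P\<in>LM_carrier M. \<forall>Q\<in>LM_carrier M.
        f (LM_mult M P Q) \<in> {LM_mult M (f P) (f Q), LM_mult M (f Q) (f P)})"

definition is_aut_LM :: "('a, 'b) monoid_scheme \<Rightarrow> ((bool \<times> bool) \<times> 'a \<Rightarrow> (bool \<times> bool) \<times> 'a) \<Rightarrow> bool" where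
  "is_aut_LM M f \<longleftrightarrow>
     bij_betw f (LM_carrier M) (LM_carrier M) \<and>
     (\<forall>P\<in>LM_carrier M. \<forall>Q\<in>LM_carrier M.
        f (LM_mult M P Q) = LM_mult M (f P) (f Q))"

(* Groups under composition; maps are taken extensional (undefined off the carrier) *)
definition Half_LM :: "('a, 'b) monoid_scheme \<Rightarrow> ((bool \<times> bool) \<times> 'a \<Rightarrow> (bool \<times> bool) \<times> 'a) monoid" where
  "Half_LM M = \<lparr>carrier = {f \<in> extensional (LM_carrier M). is_half_aut_LM M f},
                monoid.mult = (\<lambda>f g. compose (LM_carrier M) f g),
                one = (\<lambda>x\<in>LM_carrier M. x)\<rparr>"

definition Aut_LM :: "('a, 'b) monoid_scheme \<Rightarrow> ((bool \<times> bool) \<times> 'a \<Rightarrow> (bool \<times> bool) \<times> 'a) monoid" where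
  "Aut_LM M = \<lparr>carrier = {f \<in> extensional (LM_carrier M). is_aut_LM M f},
               monoid.mult = (\<lambda>f g. compose (LM_carrier M) f g),
               one = (\<lambda>x\<in>LM_carrier M. x)\<rparr>"

definition C2 :: "int monoid" where
  "C2 = integer_mod_group 2"

end

theory Submission
  imports Defs
begin


lemma km_simps[simp]:
  "klein_mult A klein_one = A" "klein_mult klein_one A = A" "klein_mult A A = klein_one"
  "klein_mult A B = klein_one \<longleftrightarrow> A = B"
  "klein_mult A (klein_mult A B) = B"
  by (cases A; cases B; auto simp: klein_mult_def klein_one_def)+

lemma km_comm: "klein_mult A B = klein_mult B A"
  by (cases A; cases B; auto simp: klein_mult_def)

lemma km_ne: "A \<noteq> klein_one \<Longrightarrow> B \<noteq> klein_one \<Longrightarrow> A \<noteq> B \<Longrightarrow> klein_mult A B \<noteq> klein_one"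
  by simp

lemma exists_other: "A \<noteq> klein_one \<Longrightarrow> \<exists>B. B \<noteq> klein_one \<and> B \<noteq> A"
  by (cases A) (auto simp: klein_one_def)

lemma LM_mult_simp[simp]: "LM_mult M (A,x) (B,y) =
   (klein_mult A B, if B = klein_one then x \<otimes>\<^bsub>M\<^esub> y else inv\<^bsub>M\<^esub> x \<otimes>\<^bsub>M\<^esub> y)"
  by (simp add: LM_mult_def)

lemma LM_carrier_iff[simp]: "(P \<in> LM_carrier M) \<longleftrightarrow> snd P \<in> carrier M"
  by (cases P) (auto simp: LM_carrier_def)

locale LMc = comm_group M for M (structure) +
  fixes m
  assumes finM: "finite (carrier M)" and m_in: "m \<in> carrier M" and m_big: "m \<otimes> m \<noteq> \<one>"
begin

abbreviation "L \<equiv> LM_carrier M"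
abbreviation "mul \<equiv> LM_mult M"

lemma finL: "finite L"
  unfolding LM_carrier_def using finM by simp

end

locale HA = LMc +
  fixes h
  assumes ha: "is_half_aut_LM M h"
begin

lemma h_bij: "bij_betw h L L" using ha unfolding is_half_aut_LM_def by blast
lemma h_in: "P \<in> L \<Longrightarrow> h P \<in> L" by (rule bij_betw_apply[OF h_bij])
lemma h_inj: "inj_on h L" using h_bij unfolding bij_betw_def by (rule conjunct1)
lemma h_mul: "P \<in> L \<Longrightarrow> Q \<in> L \<Longrightarrow> h (mul P Q) = mul (h P) (h Q) \<or> h (mul P Q) = mul (h Q) (h P)"
  using ha unfolding is_half_aut_LM_def by blast

lemma h_e: "h (klein_one, \<one>) = (klein_one, \<one>)"
proof -
  obtain A x where hx: "h (klein_one, \<one>) = (A, x)" by fastforce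
  have xin: "x \<in> carrier M" using h_in[of "(klein_one, \<one>)"] hx by simp
  have ee: "mul (klein_one, \<one>) (klein_one, \<one>) = (klein_one, \<one>)" by simp
  have "h (klein_one, \<one>) = mul (h (klein_one, \<one>)) (h (klein_one, \<one>))"
    using h_mul[of "(klein_one, \<one>)" "(klein_one, \<one>)"] ee by (metis LM_carrier_iff one_closed snd_conv)
  hence eq: "(A, x) = mul (A,x) (A,x)" using hx by metis
  hence "(A, x) = (klein_one, if A = klein_one then x \<otimes> x else inv x \<otimes> x)" by (simp only: LM_mult_simp km_simps)
  hence AA: "A = klein_one \<and> x = (if A = klein_one then x \<otimes> x else inv x \<otimes> x)" by (rule iffD1[OF prod.inject])
  have A: "A = klein_one" using AA by (rule conjunct1)
  have x2: "x = (if A = klein_one then x \<otimes> x else inv x \<otimes> x)" using AA by (rule conjunct2)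
  have "x = x \<otimes> x" using x2 if_P[OF A, of "x \<otimes> x" "inv x \<otimes> x"] by (rule trans)
  hence "x \<otimes> x = x \<otimes> \<one>" using xin by (metis r_one)
  hence "x = \<one>" using xin l_cancel by blast
  then show ?thesis using hx A by simp
qed

definition "S = {P \<in> L. mul P P = (klein_one, \<one>)}"

lemma h_S: "P \<in> S \<Longrightarrow> h P \<in> S"
proof -
  assume P: "P \<in> S"
  hence PL: "P \<in> L" and PP: "mul P P = (klein_one, \<one>)" unfolding S_def by auto
  have "h (mul P P) = mul (h P) (h P)" using h_mul[OF PL PL] by blast
  hence "mul (h P) (h P) = (klein_one, \<one>)" using PP h_e by metis
  thus "h P \<in> S" using h_in[OF PL] unfolding S_def by blast
qed

lemma h_S_eq: "h ` S = S"
proof (rule endo_inj_surj)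
  have "S \<subseteq> L" unfolding S_def by blast
  then show "finite S" using finL by (rule finite_subset)
  show "h ` S \<subseteq> S" using h_S by auto
  show "inj_on h S" using h_inj by (rule inj_on_subset) (auto simp: S_def)
qed

lemma h_notS: "P \<in> L \<Longrightarrow> P \<notin> S \<Longrightarrow> h P \<notin> S"
proof
  assume "P \<in> L" "P \<notin> S" "h P \<in> S"
  then obtain Q where "Q \<in> S" "h Q = h P" using h_S_eq by (metis imageE)
  moreover have "Q \<in> L" using \<open>Q \<in> S\<close> unfolding S_def by blast
  ultimately have "Q = P" using \<open>P \<in> L\<close> h_inj by (simp add: inj_on_def)
  then show False using \<open>P \<notin> S\<close> \<open>Q \<in> S\<close> by simp
qed

lemma fst_hN_big: "x \<in> carrier M \<Longrightarrow> x \<otimes> x \<noteq> \<one> \<Longrightarrow> fst (h (klein_one, x)) = klein_one"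
proof -
  assume x: "x \<in> carrier M" "x \<otimes> x \<noteq> \<one>"
  have "(klein_one, x) \<notin> S" using x by (simp add: S_def)
  hence "h (klein_one, x) \<notin> S" using h_notS x by simp
  moreover have "h (klein_one, x) \<in> L" using h_in x by simp
  ultimately show ?thesis
  proof (cases "h (klein_one, x)")
    case (Pair B y)
    assume "h (klein_one, x) \<notin> S" "h (klein_one, x) \<in> L"
    hence "y \<in> carrier M" "mul (B,y) (B,y) \<noteq> (klein_one, \<one>)" using Pair unfolding S_def by auto
    hence "B = klein_one" by (cases "B = klein_one") auto
    thus ?thesis using Pair by simp
  qed
qed

lemma fst_hN: "x \<in> carrier M \<Longrightarrow> fst (h (klein_one, x)) = klein_one"
proof (cases "x \<otimes> x = \<one>")
  case False
  assume "x \<in> carrier M" thus ?thesis using fst_hN_big False by simp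
next
  case True
  assume x: "x \<in> carrier M"
  have big: "(m \<otimes> x) \<otimes> (m \<otimes> x) \<noteq> \<one>"
    using True x m_in m_big by (metis m_assoc m_closed m_lcomm r_one)
  have "mul (klein_one, m) (klein_one, x) = (klein_one, m \<otimes> x)" by simp
  then have "h (klein_one, m \<otimes> x) = mul (h (klein_one, m)) (h (klein_one, x)) \<or>
             h (klein_one, m \<otimes> x) = mul (h (klein_one, x)) (h (klein_one, m))"
    using h_mul[of "(klein_one, m)" "(klein_one, x)"] x m_in by simp
  moreover have "fst (h (klein_one, m \<otimes> x)) = klein_one" using fst_hN_big big x m_in by simp
  moreover have "fst (h (klein_one, m)) = klein_one" using fst_hN_big m_in m_big by simp
  ultimately show ?thesis
    by (metis LM_mult_def fst_conv km_simps(1,2))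
qed

definition "phi x = snd (h (klein_one, x))"

lemma hN: "x \<in> carrier M \<Longrightarrow> h (klein_one, x) = (klein_one, phi x)"
  using fst_hN by (simp add: phi_def prod_eq_iff)

lemma phi_in[simp]: "x \<in> carrier M \<Longrightarrow> phi x \<in> carrier M"
  using h_in[of "(klein_one, x)"] by (simp add: phi_def)

lemma phi_mult: "x \<in> carrier M \<Longrightarrow> y \<in> carrier M \<Longrightarrow> phi (x \<otimes> y) = phi x \<otimes> phi y"
proof -
  assume xy: "x \<in> carrier M" "y \<in> carrier M"
  have "mul (klein_one, x) (klein_one, y) = (klein_one, x \<otimes> y)" by simp
  moreover have "h (klein_one, x \<otimes> y) = (klein_one, phi (x \<otimes> y))" using xy hN by simp
  ultimately show ?thesis using h_mul[of "(klein_one, x)" "(klein_one, y)"] xy hN[of x] hN[of y] m_comm[of "phi x" "phi y"]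
    by auto
qed

lemma phi_one[simp]: "phi \<one> = \<one>"
  using h_e by (simp add: phi_def)

lemma phi_inv[simp]: "x \<in> carrier M \<Longrightarrow> phi (inv x) = inv (phi x)"
proof -
  assume x: "x \<in> carrier M"
  have "phi (inv x) \<otimes> phi x = \<one>" using phi_mult[of "inv x" x] x by simp
  thus ?thesis using x by (metis inv_closed inv_equality phi_in)
qed

lemma phi_inj: "x \<in> carrier M \<Longrightarrow> y \<in> carrier M \<Longrightarrow> phi x = phi y \<Longrightarrow> x = y"
  using h_inj hN by (metis LM_carrier_iff inj_onD prod.inject snd_conv)

lemma phi_m: "phi m \<otimes> phi m \<noteq> \<one>"
  using phi_mult[of m m] m_in m_big phi_inj[of "m \<otimes> m" \<one>] by auto

end



context comm_group begin

lemma AL_a: "t \<in> carrier G \<Longrightarrow> a \<in> carrier G \<Longrightarrow> b \<in> carrier G \<Longrightarrow>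
  inv (t \<otimes> a) \<otimes> (t \<otimes> b) = inv a \<otimes> b"
  by (smt (verit, best) comm_group_axioms comm_group_def
    group.inv_solve_left inv_closed m_assoc m_closed)

lemma AL_b: "s \<in> carrier G \<Longrightarrow> t \<in> carrier G \<Longrightarrow> a \<in> carrier G \<Longrightarrow> b \<in> carrier G \<Longrightarrow>
  inv (s \<otimes> a) \<otimes> (t \<otimes> b) = (inv s \<otimes> t) \<otimes> (inv a \<otimes> b)"
  by (simp add: inv_mult_group m_assoc m_lcomm)

lemma sq_inv: "q \<in> carrier G \<Longrightarrow> q = inv q \<Longrightarrow> q \<otimes> q = \<one>"
  by (metis r_inv)

lemma AL1: "t \<in> carrier G \<Longrightarrow> a \<in> carrier G \<Longrightarrow> b \<in> carrier G \<Longrightarrow>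
  inv a \<otimes> b = inv (t \<otimes> a) \<otimes> (t \<otimes> inv b) \<or> inv a \<otimes> b = inv (t \<otimes> inv b) \<otimes> (t \<otimes> a)
  \<Longrightarrow> b = inv b \<or> a = inv a"
proof -
  assume c: "t \<in> carrier G" "a \<in> carrier G" "b \<in> carrier G"
  assume "inv a \<otimes> b = inv (t \<otimes> a) \<otimes> (t \<otimes> inv b) \<or> inv a \<otimes> b = inv (t \<otimes> inv b) \<otimes> (t \<otimes> a)"
  hence "inv a \<otimes> b = inv a \<otimes> inv b \<or> inv a \<otimes> b = b \<otimes> a"
    using AL_a[of t a "inv b"] AL_a[of t "inv b" a] c by simp
  moreover have "inv a \<otimes> b = inv a \<otimes> inv b \<Longrightarrow> b = inv b" using c l_cancel[of "inv a" b "inv b"] by simp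
  moreover have "inv a \<otimes> b = b \<otimes> a \<Longrightarrow> a = inv a"
    using c r_cancel[of b "inv a" a] m_comm[of b a] by simp
  ultimately show ?thesis by blast
qed

lemma AL2: assumes c: "a \<in> carrier G" "w \<in> carrier G" "W \<in> carrier G" "q \<in> carrier G" and qq: "q \<otimes> q \<noteq> \<one>"
  and H1: "a = w \<or> a = inv w"
  and H2: "a \<otimes> inv q \<otimes> inv q = w \<or> a \<otimes> inv q \<otimes> inv q = inv w"
  and H3: "a \<otimes> inv q = W \<or> a \<otimes> inv q = inv W"
  and H4: "a \<otimes> q = W \<or> a \<otimes> q = inv W"
  shows False
proof -
  have qi: "inv q \<noteq> q" using qq c sq_inv by metis
  have aa: "a \<otimes> a = \<one>"
  proof -
    have "(a \<otimes> inv q) \<otimes> (a \<otimes> q) = a \<otimes> a" using c by (simp add: m_ac)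
    moreover have "a \<otimes> inv q \<noteq> a \<otimes> q" using qi c l_cancel by blast
    moreover have "(a \<otimes> inv q) \<otimes> (a \<otimes> q) = \<one>"
    proof -
      { assume "a \<otimes> inv q = W" "a \<otimes> q = inv W" hence ?thesis using c by simp }
      moreover { assume "a \<otimes> inv q = inv W" "a \<otimes> q = W" hence ?thesis using c by simp }
      ultimately show ?thesis using H3 H4 \<open>a \<otimes> inv q \<noteq> a \<otimes> q\<close> by metis
    qed
    ultimately show ?thesis by simp
  qed
  hence ai: "inv a = a" using c by (metis inv_equality)
  have "w = a" using H1 ai c by (metis inv_inv)
  moreover have "inv w = a" using H1 ai c by (metis inv_inv)
  ultimately have "a \<otimes> inv q \<otimes> inv q = a \<otimes> \<one>" using H2 c by simp
  hence "inv q \<otimes> inv q = \<one>" using c by (simp add: m_assoc)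
  hence "q \<otimes> q = \<one>" using c by (metis inv_closed inv_mult inv_one inv_inv)
  thus False using qq by simp
qed

lemma AL3: "a \<in> carrier G \<Longrightarrow> s \<in> carrier G \<Longrightarrow> t \<in> carrier G \<Longrightarrow> p \<in> carrier G \<Longrightarrow> p \<otimes> p \<noteq> \<one> \<Longrightarrow>
  a = inv s \<otimes> t \<or> a = inv t \<otimes> s \<Longrightarrow>
  a \<otimes> p = inv s \<otimes> (t \<otimes> p) \<or> a \<otimes> p = inv (t \<otimes> p) \<otimes> s \<Longrightarrow> a = inv s \<otimes> t"
proof -
  assume c: "a \<in> carrier G" "s \<in> carrier G" "t \<in> carrier G" "p \<in> carrier G" and pp: "p \<otimes> p \<noteq> \<one>"
    and E1: "a = inv s \<otimes> t \<or> a = inv t \<otimes> s"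
    and E2: "a \<otimes> p = inv s \<otimes> (t \<otimes> p) \<or> a \<otimes> p = inv (t \<otimes> p) \<otimes> s"
  show "a = inv s \<otimes> t"
  proof (cases "a = inv s \<otimes> t")
    case False
    hence a: "a = inv t \<otimes> s" using E1 by blast
    show ?thesis
    proof (cases "a \<otimes> p = inv s \<otimes> (t \<otimes> p)")
      case True
      hence "a \<otimes> p = (inv s \<otimes> t) \<otimes> p" using c by (simp add: m_assoc)
      thus ?thesis using c r_cancel by (metis inv_closed m_closed)
    next
      case F: False
      hence "(inv t \<otimes> s) \<otimes> p = (inv t \<otimes> s) \<otimes> inv p" using E2 a c by (simp add: inv_mult m_ac)
      hence "p = inv p" using c l_cancel by (metis inv_closed m_closed)
      thus ?thesis using pp sq_inv c by blast
    qed
  qed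
qed

lemma W2g: "s \<in> carrier G \<Longrightarrow> t \<in> carrier G \<Longrightarrow> p \<in> carrier G \<Longrightarrow> inv t \<otimes> (s \<otimes> p) = inv (inv (s \<otimes> p) \<otimes> t)"
  by (simp add: inv_mult_group)
lemma W3g: "s \<in> carrier G \<Longrightarrow> t \<in> carrier G \<Longrightarrow> p \<in> carrier G \<Longrightarrow> inv s \<otimes> (t \<otimes> inv p) = inv (s \<otimes> p) \<otimes> t"
  by (simp add: m_comm inv_mult m_lcomm)
lemma W4g: "s \<in> carrier G \<Longrightarrow> t \<in> carrier G \<Longrightarrow> p \<in> carrier G \<Longrightarrow> inv (t \<otimes> inv p) \<otimes> s = inv (inv (s \<otimes> p) \<otimes> t)"
  using comm_groupE(4) comm_group_axioms inv_mult_group m_lcomm by fastforce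
lemma w2g: "s \<in> carrier G \<Longrightarrow> t \<in> carrier G \<Longrightarrow> p \<in> carrier G \<Longrightarrow> inv (s \<otimes> p) \<otimes> (t \<otimes> p) = inv s \<otimes> t"
  by (simp add: AL_b)
end

context HA begin

definition "sig A = fst (h (A, \<one>))"
definition "tt A = snd (h (A, \<one>))"
definition "psi A x = snd (h (A, x))"

lemma tt_in[simp]: "tt A \<in> carrier M"
  using h_in[of "(A, \<one>)"] by (simp add: tt_def)

lemma psi_in[simp]: "x \<in> carrier M \<Longrightarrow> psi A x \<in> carrier M"
  using h_in[of "(A, x)"] by (simp add: psi_def)

lemma psi_one: "psi A \<one> = tt A" by (simp add: psi_def tt_def)

lemma sig_ne: assumes A: "A \<noteq> klein_one" shows "sig A \<noteq> klein_one"
proof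
  assume s: "sig A = klein_one"
  define N where "N = {klein_one} \<times> carrier M"
  have NL: "N \<subseteq> L" unfolding N_def by auto
  have "h ` N = N"
  proof (rule endo_inj_surj)
    show "finite N" using finL NL by (rule finite_subset[rotated])
    show "h ` N \<subseteq> N" unfolding N_def using hN by auto
    show "inj_on h N" using h_inj NL by (rule inj_on_subset)
  qed
  moreover have "h (A, \<one>) \<in> N" using s h_in[of "(A, \<one>)"] unfolding N_def sig_def
    by (cases "h (A, \<one>)") auto
  ultimately obtain y where "y \<in> N" "h y = h (A, \<one>)" by (metis imageE)
  hence "y = (A, \<one>)" using NL h_inj by (auto simp: inj_on_def)
  thus False using \<open>y \<in> N\<close> A unfolding N_def by auto
qed

lemma h_pair: "h (A, x) = (fst (h (A, x)), psi A x)" by (simp add: psi_def)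

lemma hA: assumes A: "A \<noteq> klein_one" and x: "x \<in> carrier M"
  shows "fst (h (A, x)) = sig A \<and> (psi A x = tt A \<otimes> phi x \<or> psi A x = tt A \<otimes> inv (phi x))"
proof -
  have e1: "mul (A, \<one>) (klein_one, x) = (A, x)" using x by simp
  have "h (mul (A, \<one>) (klein_one, x)) = mul (h (A, \<one>)) (h (klein_one, x)) \<or>
        h (mul (A, \<one>) (klein_one, x)) = mul (h (klein_one, x)) (h (A, \<one>))"
    using h_mul[of "(A, \<one>)" "(klein_one, x)"] x by simp
  hence "h (A, x) = mul (sig A, tt A) (klein_one, phi x) \<or> h (A, x) = mul (klein_one, phi x) (sig A, tt A)"
    unfolding e1 using hN[OF x] by (simp add: sig_def tt_def)
  hence "h (A, x) = (sig A, tt A \<otimes> phi x) \<or> h (A, x) = (sig A, inv (phi x) \<otimes> tt A)"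
    using sig_ne[OF A] by simp
  moreover have "inv (phi x) \<otimes> tt A = tt A \<otimes> inv (phi x)" using x by (simp add: m_comm)
  ultimately show ?thesis by (auto simp: psi_def)
qed

lemma hA_pair: "A \<noteq> klein_one \<Longrightarrow> x \<in> carrier M \<Longrightarrow> h (A, x) = (sig A, psi A x)"
  using hA h_pair by metis

lemma hAA: assumes A: "A \<noteq> klein_one" and x: "x \<in> carrier M" and y: "y \<in> carrier M"
  shows "inv (phi x) \<otimes> phi y = inv (psi A x) \<otimes> psi A y \<or> inv (phi x) \<otimes> phi y = inv (psi A y) \<otimes> psi A x"
proof -
  have e1: "mul (A, x) (A, y) = (klein_one, inv x \<otimes> y)" using A by simp
  have "h (mul (A, x) (A, y)) = mul (h (A, x)) (h (A, y)) \<or>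
        h (mul (A, x) (A, y)) = mul (h (A, y)) (h (A, x))"
    using h_mul[of "(A, x)" "(A, y)"] x y by simp
  moreover have "h (mul (A, x) (A, y)) = (klein_one, inv (phi x) \<otimes> phi y)"
    unfolding e1 using x y by (simp add: hN phi_mult)
  ultimately show ?thesis using hA_pair[OF A x] hA_pair[OF A y] sig_ne[OF A] by auto
qed

lemma coset_uniform: assumes A: "A \<noteq> klein_one"
  shows "(\<forall>x\<in>carrier M. psi A x = tt A \<otimes> phi x) \<or> (\<forall>x\<in>carrier M. psi A x = tt A \<otimes> inv (phi x))"
proof (rule ccontr)
  assume "\<not> ?thesis"
  then obtain a b where a: "a \<in> carrier M" "psi A a \<noteq> tt A \<otimes> phi a"
    and b: "b \<in> carrier M" "psi A b \<noteq> tt A \<otimes> inv (phi b)" by auto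
  have pa: "psi A a = tt A \<otimes> inv (phi a)" using hA[OF A a(1)] a(2) by auto
  have pb: "psi A b = tt A \<otimes> phi b" using hA[OF A b(1)] b(2) by auto
  have na: "phi a \<noteq> inv (phi a)" using a pa by auto
  have nb: "phi b \<noteq> inv (phi b)" using b pb by auto
  have "inv (phi b) \<otimes> phi a = inv (psi A b) \<otimes> psi A a \<or> inv (phi b) \<otimes> phi a = inv (psi A a) \<otimes> psi A b"
    using hAA[OF A b(1) a(1)] .
  hence "inv (phi b) \<otimes> phi a = inv (tt A \<otimes> phi b) \<otimes> (tt A \<otimes> inv (phi a)) \<or>
         inv (phi b) \<otimes> phi a = inv (tt A \<otimes> inv (phi a)) \<otimes> (tt A \<otimes> phi b)"
    unfolding pa pb .
  hence "phi a = inv (phi a) \<or> phi b = inv (phi b)"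
    using AL1[of "tt A" "phi b" "phi a"] a b by simp
  thus False using na nb by blast
qed

lemma hAB: assumes A: "A \<noteq> klein_one" and B: "B \<noteq> klein_one" and AB: "A \<noteq> B"
  and x: "x \<in> carrier M" and y: "y \<in> carrier M"
  shows "sig (klein_mult A B) = klein_mult (sig A) (sig B) \<and>
    (psi (klein_mult A B) (inv x \<otimes> y) = inv (psi A x) \<otimes> psi B y \<or>
     psi (klein_mult A B) (inv x \<otimes> y) = inv (psi B y) \<otimes> psi A x)"
proof -
  have C: "klein_mult A B \<noteq> klein_one" using AB by simp
  have e1: "mul (A, x) (B, y) = (klein_mult A B, inv x \<otimes> y)" using B by simp
  have "h (mul (A, x) (B, y)) = mul (h (A, x)) (h (B, y)) \<or>
        h (mul (A, x) (B, y)) = mul (h (B, y)) (h (A, x))"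
    using h_mul[of "(A, x)" "(B, y)"] x y by simp
  moreover have "h (mul (A, x) (B, y)) = (sig (klein_mult A B), psi (klein_mult A B) (inv x \<otimes> y))"
    unfolding e1 using x y hA_pair[OF C] by simp
  ultimately show ?thesis using hA_pair[OF A x] hA_pair[OF B y] sig_ne[OF A] sig_ne[OF B]
    by (auto simp: km_comm)
qed

lemma no_mixed: assumes A: "A \<noteq> klein_one" and B: "B \<noteq> klein_one" and AB: "A \<noteq> B"
  and fA: "\<forall>x\<in>carrier M. psi A x = tt A \<otimes> phi x"
  and fB: "\<forall>x\<in>carrier M. psi B x = tt B \<otimes> inv (phi x)"
  shows False
proof -
  define C where "C = klein_mult A B"
  have C: "C \<noteq> klein_one" using AB by (simp add: C_def)
  define p where "p = phi m"
  have p: "p \<in> carrier M" "p \<otimes> p \<noteq> \<one>" using phi_m m_in by (auto simp: p_def)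
  have mi: "inv m \<in> carrier M" using m_in by simp
  have pA1: "psi A \<one> = tt A" and pAm: "psi A m = tt A \<otimes> p"
    using fA m_in by (auto simp: p_def)
  have pB1: "psi B \<one> = tt B" and pBm: "psi B m = tt B \<otimes> inv p" and pBi: "psi B (inv m) = tt B \<otimes> p"
    using fB m_in by (auto simp: p_def)
  have E1: "tt C = inv (tt A) \<otimes> tt B \<or> tt C = inv (tt B) \<otimes> tt A"
    using hAB[OF A B AB one_closed one_closed] by (simp add: pA1 pB1 psi_one C_def)
  have E2: "psi C (inv m \<otimes> inv m) = inv (tt A \<otimes> p) \<otimes> (tt B \<otimes> p) \<or>
            psi C (inv m \<otimes> inv m) = inv (tt B \<otimes> p) \<otimes> (tt A \<otimes> p)"
    using hAB[OF A B AB m_in mi] by (simp add: pAm pBi C_def)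
  have E3: "psi C (inv m) = inv (tt A \<otimes> p) \<otimes> tt B \<or> psi C (inv m) = inv (tt B) \<otimes> (tt A \<otimes> p)"
    using hAB[OF A B AB m_in one_closed] mi by (simp add: pAm pB1 C_def)
  have E4: "psi C m = inv (tt A) \<otimes> (tt B \<otimes> inv p) \<or> psi C m = inv (tt B \<otimes> inv p) \<otimes> tt A"
    using hAB[OF A B AB one_closed m_in] m_in by (simp add: pA1 pBm C_def)
  obtain q where q: "q \<in> carrier M" "q \<otimes> q \<noteq> \<one>" and
    qC: "psi C m = tt C \<otimes> q" "psi C (inv m) = tt C \<otimes> inv q" "psi C (inv m \<otimes> inv m) = tt C \<otimes> inv q \<otimes> inv q"
  proof (cases "\<forall>x\<in>carrier M. psi C x = tt C \<otimes> phi x")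
    case True
    show ?thesis
    proof (rule that[of p])
      show "p \<in> carrier M" "p \<otimes> p \<noteq> \<one>" by (fact p)+
      show "psi C m = tt C \<otimes> p" using True m_in by (simp add: p_def)
      show "psi C (inv m) = tt C \<otimes> inv p" using True m_in by (simp add: p_def)
      show "psi C (inv m \<otimes> inv m) = tt C \<otimes> inv p \<otimes> inv p" using True m_in p
        by (simp add: p_def phi_mult m_assoc)
    qed
  next
    case False
    hence F: "\<forall>x\<in>carrier M. psi C x = tt C \<otimes> inv (phi x)" using coset_uniform[OF C] by blast
    show ?thesis
    proof (rule that[of "inv p"])
      show "inv p \<in> carrier M" using p by simp
      show "inv p \<otimes> inv p \<noteq> \<one>" using p by (metis inv_closed inv_inv inv_mult m_closed inv_one)
      show "psi C m = tt C \<otimes> inv p" using F m_in by (simp add: p_def)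
      show "psi C (inv m) = tt C \<otimes> inv (inv p)" using F m_in by (simp add: p_def)
      show "psi C (inv m \<otimes> inv m) = tt C \<otimes> inv (inv p) \<otimes> inv (inv p)" using F m_in p
        by (simp add: p_def phi_mult m_assoc inv_mult)
    qed
  qed
  define w where "w = inv (tt A) \<otimes> tt B"
  define W where "W = inv (tt A \<otimes> p) \<otimes> tt B"
  have winv: "inv w = inv (tt B) \<otimes> tt A" unfolding w_def by (simp add: inv_mult m_comm)
  have w2: "inv (tt A \<otimes> p) \<otimes> (tt B \<otimes> p) = w" unfolding w_def using p by (simp add: w2g)
  have w3: "inv (tt B \<otimes> p) \<otimes> (tt A \<otimes> p) = inv w" unfolding winv using p by (simp add: w2g)
  have W2: "inv (tt B) \<otimes> (tt A \<otimes> p) = inv W" unfolding W_def using p by (simp add: W2g)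
  have W3: "inv (tt A) \<otimes> (tt B \<otimes> inv p) = W" unfolding W_def using p by (simp add: W3g)
  have W4: "inv (tt B \<otimes> inv p) \<otimes> tt A = inv W" unfolding W_def using p by (simp add: W4g)
  show False
  proof (rule AL2[of "tt C" w W q])
    show "tt C \<in> carrier M" "w \<in> carrier M" "W \<in> carrier M" "q \<in> carrier M" "q \<otimes> q \<noteq> \<one>"
      using q p by (auto simp: w_def W_def)
    show "tt C = w \<or> tt C = inv w" using E1 winv w_def by auto
    show "tt C \<otimes> inv q \<otimes> inv q = w \<or> tt C \<otimes> inv q \<otimes> inv q = inv w" using E2 qC w2 w3 by auto
    show "tt C \<otimes> inv q = W \<or> tt C \<otimes> inv q = inv W" using E3 qC W2 W_def by auto
    show "tt C \<otimes> q = W \<or> tt C \<otimes> q = inv W" using E4 qC W3 W4 by auto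
  qed
qed

lemma global_uniform:
  "(\<forall>A. A \<noteq> klein_one \<longrightarrow> (\<forall>x\<in>carrier M. psi A x = tt A \<otimes> phi x)) \<or>
   (\<forall>A. A \<noteq> klein_one \<longrightarrow> (\<forall>x\<in>carrier M. psi A x = tt A \<otimes> inv (phi x)))"
proof (rule ccontr)
  assume "\<not> ?thesis"
  then obtain A B where A: "A \<noteq> klein_one" "\<not> (\<forall>x\<in>carrier M. psi A x = tt A \<otimes> phi x)"
    and B: "B \<noteq> klein_one" "\<not> (\<forall>x\<in>carrier M. psi B x = tt B \<otimes> inv (phi x))" by blast
  have fA: "\<forall>x\<in>carrier M. psi A x = tt A \<otimes> inv (phi x)" using coset_uniform[OF A(1)] A(2) by blast
  have fB: "\<forall>x\<in>carrier M. psi B x = tt B \<otimes> phi x" using coset_uniform[OF B(1)] B(2) by blast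
  have "A \<noteq> B" using A(2) fB by auto
  then show False using no_mixed[OF B(1) A(1) _ fB fA] by auto
qed

lemma t_rel: assumes T: "\<forall>A. A \<noteq> klein_one \<longrightarrow> (\<forall>x\<in>carrier M. psi A x = tt A \<otimes> phi x)"
  and A: "A \<noteq> klein_one" and B: "B \<noteq> klein_one" and AB: "A \<noteq> B"
  shows "tt (klein_mult A B) = inv (tt A) \<otimes> tt B"
proof -
  define C where "C = klein_mult A B"
  have C: "C \<noteq> klein_one" using AB by (simp add: C_def)
  have E1: "tt C = inv (tt A) \<otimes> tt B \<or> tt C = inv (tt B) \<otimes> tt A"
    using hAB[OF A B AB one_closed one_closed] T A B by (simp add: psi_one C_def)
  have E2: "tt C \<otimes> phi m = inv (tt A) \<otimes> (tt B \<otimes> phi m) \<or> tt C \<otimes> phi m = inv (tt B \<otimes> phi m) \<otimes> tt A"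
  proof -
    have "psi C m = tt C \<otimes> phi m" using T C m_in by blast
    moreover have "psi B m = tt B \<otimes> phi m" using T B m_in by blast
    ultimately show ?thesis using hAB[OF A B AB one_closed m_in] m_in by (simp add: psi_one C_def)
  qed
  show ?thesis using AL3[OF tt_in tt_in tt_in phi_in[OF m_in] phi_m E1 E2] by (simp add: C_def)
qed

lemma true_hom: assumes T: "\<forall>A. A \<noteq> klein_one \<longrightarrow> (\<forall>x\<in>carrier M. psi A x = tt A \<otimes> phi x)"
  and P: "P \<in> L" and Q: "Q \<in> L"
  shows "h (mul P Q) = mul (h P) (h Q)"
proof -
  obtain A x B y where PQ: "P = (A, x)" "Q = (B, y)" by fastforce
  have x: "x \<in> carrier M" and y: "y \<in> carrier M" using P Q PQ by auto
  have hT: "\<And>A z. A \<noteq> klein_one \<Longrightarrow> z \<in> carrier M \<Longrightarrow> h (A, z) = (sig A, tt A \<otimes> phi z)"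
    using hA_pair T by simp
  show ?thesis
  proof (cases "B = klein_one")
    case B: True
    show ?thesis
    proof (cases "A = klein_one")
      case True
      thus ?thesis using B x y PQ by (simp add: hN phi_mult)
    next
      case False
      thus ?thesis using B x y PQ by (simp add: hN hT phi_mult m_assoc)
    qed
  next
    case B: False
    show ?thesis
    proof (cases "A = klein_one")
      case True
      thus ?thesis using B x y PQ sig_ne[OF B] by (simp add: hN hT phi_mult m_lcomm)
    next
      case A: False
      show ?thesis
      proof (cases "A = B")
        case True
        thus ?thesis using A B x y PQ sig_ne[OF B] by (simp add: hN hT phi_mult AL_a)
      next
        case AB: False
        have sC: "sig (klein_mult A B) = klein_mult (sig A) (sig B)" using hAB[OF A B AB x y] by blast
        have tC: "tt (klein_mult A B) = inv (tt A) \<otimes> tt B" using t_rel[OF T A B AB] .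
        have C: "klein_mult A B \<noteq> klein_one" using AB by simp
        show ?thesis using A B C x y PQ sig_ne[OF B] sC tC by (simp add: hN hT phi_mult AL_b)
      qed
    qed
  qed
qed

end



context comm_group begin
lemma AL4: assumes a: "a \<in> carrier G" and b: "b \<in> carrier G" and e: "b = inv a \<otimes> (inv a \<otimes> b)"
  shows "a \<otimes> a = \<one>"
proof -
  have "\<one> \<otimes> b = (inv a \<otimes> inv a) \<otimes> b" using a b e by (metis l_one m_assoc inv_closed)
  hence "inv a \<otimes> inv a = \<one>" using a b by (metis r_cancel inv_closed m_closed one_closed)
  thus ?thesis using a by (metis inv_mult inv_inv inv_one inv_closed)
qed
lemma AL5: "t \<in> carrier G \<Longrightarrow> p \<in> carrier G \<Longrightarrow> inv (t \<otimes> inv p) = inv t \<otimes> p"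
  by (simp add: inv_mult)
end

context LMc begin

definition "gmap = (\<lambda>P\<in>L. (fst P, if fst P = klein_one then snd P else inv (snd P)))"

lemma g_pair: "x \<in> carrier M \<Longrightarrow> gmap (A, x) = (A, if A = klein_one then x else inv x)"
  by (simp add: gmap_def)

lemma g_in: "P \<in> L \<Longrightarrow> gmap P \<in> L"
  by (cases P) (simp add: g_pair)

lemma g_g: "P \<in> L \<Longrightarrow> gmap (gmap P) = P"
  by (cases P) (simp add: g_pair)

lemma g_ext: "gmap \<in> extensional L"
  unfolding gmap_def by simp

lemma g_bij: "bij_betw gmap L L"
proof (rule bij_betw_byWitness[where f'=gmap])
  show "\<forall>a\<in>L. gmap (gmap a) = a" using g_g by blast
  show "\<forall>a\<in>L. gmap (gmap a) = a" using g_g by blast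
  show "gmap ` L \<subseteq> L" using g_in by blast
  show "gmap ` L \<subseteq> L" using g_in by blast
qed

lemma mul_in: "P \<in> L \<Longrightarrow> Q \<in> L \<Longrightarrow> mul P Q \<in> L"
  by (cases P; cases Q) auto

lemma g_half: "is_half_aut_LM M gmap"
  unfolding is_half_aut_LM_def
proof (intro conjI ballI g_bij)
  fix P Q assume P: "P \<in> L" and Q: "Q \<in> L"
  obtain A x B y where PQ: "P = (A, x)" "Q = (B, y)" by fastforce
  have x: "x \<in> carrier M" and y: "y \<in> carrier M" using P Q PQ by auto
  have "gmap (mul (A, x) (B, y)) = mul (gmap (A, x)) (gmap (B, y)) \<or>
        gmap (mul (A, x) (B, y)) = mul (gmap (B, y)) (gmap (A, x))"
  proof (cases "B = klein_one")
    case B: True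
    show ?thesis
    proof (cases "A = klein_one")
      case True thus ?thesis using B x y by (simp add: g_pair)
    next
      case False thus ?thesis using B x y by (simp add: g_pair inv_mult m_comm)
    qed
  next
    case B: False
    show ?thesis
    proof (cases "A = klein_one")
      case True thus ?thesis using B x y by (simp add: g_pair inv_mult m_comm)
    next
      case A: False
      show ?thesis
      proof (cases "A = B")
        case True thus ?thesis using A B x y by (simp add: g_pair m_comm)
      next
        case False thus ?thesis using A B x y by (simp add: g_pair inv_mult m_comm)
      qed
    qed
  qed
  thus "gmap (mul P Q) \<in> {mul (gmap P) (gmap Q), mul (gmap Q) (gmap P)}" using PQ by auto
qed

lemma half_comp: assumes f: "is_half_aut_LM M f" and g: "is_half_aut_LM M g"
  shows "is_half_aut_LM M (compose L f g)"
  unfolding is_half_aut_LM_def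
proof (intro conjI ballI)
  have bf: "bij_betw f L L" and bg: "bij_betw g L L" using f g by (auto simp: is_half_aut_LM_def)
  have "bij_betw (f \<circ> g) L L" using bg bf by (rule bij_betw_trans)
  thus "bij_betw (compose L f g) L L" by (rule bij_betw_cong[THEN iffD1, rotated]) (simp add: compose_eq)
  fix P Q assume P: "P \<in> L" and Q: "Q \<in> L"
  have gP: "g P \<in> L" and gQ: "g Q \<in> L" using bg P Q bij_betwE by blast+
  have "g (mul P Q) \<in> {mul (g P) (g Q), mul (g Q) (g P)}" using g P Q by (auto simp: is_half_aut_LM_def)
  moreover have "f (mul (g P) (g Q)) \<in> {mul (f (g P)) (f (g Q)), mul (f (g Q)) (f (g P))}"
    using f gP gQ by (auto simp: is_half_aut_LM_def)
  moreover have "f (mul (g Q) (g P)) \<in> {mul (f (g Q)) (f (g P)), mul (f (g P)) (f (g Q))}"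
    using f gP gQ by (auto simp: is_half_aut_LM_def)
  ultimately show "compose L f g (mul P Q) \<in> {mul (compose L f g P) (compose L f g Q), mul (compose L f g Q) (compose L f g P)}"
    using P Q mul_in[OF P Q] by (auto simp: compose_eq)
qed

lemma aut_half: "is_aut_LM M f \<Longrightarrow> is_half_aut_LM M f"
  by (auto simp: is_aut_LM_def is_half_aut_LM_def)

lemma aut_comp: assumes f: "is_aut_LM M f" and g: "is_aut_LM M g"
  shows "is_aut_LM M (compose L f g)"
  unfolding is_aut_LM_def
proof (intro conjI ballI)
  have bf: "bij_betw f L L" and bg: "bij_betw g L L" using f g by (auto simp: is_aut_LM_def)
  have "bij_betw (f \<circ> g) L L" using bg bf by (rule bij_betw_trans)
  thus "bij_betw (compose L f g) L L" by (rule bij_betw_cong[THEN iffD1, rotated]) (simp add: compose_eq)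
  fix P Q assume P: "P \<in> L" and Q: "Q \<in> L"
  have gP: "g P \<in> L" and gQ: "g Q \<in> L" using bg P Q bij_betwE by blast+
  have "g (mul P Q) = mul (g P) (g Q)" using g P Q by (auto simp: is_aut_LM_def)
  moreover have "f (mul (g P) (g Q)) = mul (f (g P)) (f (g Q))"
    using f gP gQ by (auto simp: is_aut_LM_def)
  ultimately show "compose L f g (mul P Q) = mul (compose L f g P) (compose L f g Q)"
    using P Q mul_in[OF P Q] by (simp add: compose_eq)
qed

lemma dichot: assumes h: "is_half_aut_LM M h"
  shows "is_aut_LM M h \<or> is_aut_LM M (compose L gmap h)"
proof -
  interpret H: HA M m h by unfold_locales (fact h)
  show ?thesis
  proof (cases "\<forall>A. A \<noteq> klein_one \<longrightarrow> (\<forall>x\<in>carrier M. H.psi A x = H.tt A \<otimes> H.phi x)")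
    case True
    have "is_aut_LM M h" unfolding is_aut_LM_def using H.h_bij H.true_hom[OF True] by blast
    thus ?thesis ..
  next
    case False
    hence F: "\<forall>A. A \<noteq> klein_one \<longrightarrow> (\<forall>x\<in>carrier M. H.psi A x = H.tt A \<otimes> inv (H.phi x))"
      using H.global_uniform by blast
    define h' where "h' = compose L gmap h"
    have h': "is_half_aut_LM M h'" unfolding h'_def by (rule half_comp[OF g_half h])
    interpret H': HA M m h' by unfold_locales (fact h')
    have phi': "H'.phi x = H.phi x" if x: "x \<in> carrier M" for x
      unfolding H'.phi_def unfolding h'_def using x H.hN[OF x] by (simp add: compose_eq g_pair)
    have psi': "H'.psi A x = inv (H.psi A x)" if A: "A \<noteq> klein_one" and x: "x \<in> carrier M" for A x
      unfolding H'.psi_def unfolding h'_def using x H.hA_pair[OF A x] H.sig_ne[OF A] by (simp add: compose_eq g_pair)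
    have T: "\<forall>A. A \<noteq> klein_one \<longrightarrow> (\<forall>x\<in>carrier M. H'.psi A x = H'.tt A \<otimes> H'.phi x)"
    proof (intro allI impI ballI)
      fix A x assume A: "A \<noteq> klein_one" and x: "x \<in> carrier M"
      have tt': "H'.tt A = inv (H.tt A)"
        using psi'[OF A one_closed] F A by (simp add: H'.psi_one[symmetric])
      show "H'.psi A x = H'.tt A \<otimes> H'.phi x"
        using psi'[OF A x] F A x tt' phi'[OF x] by (simp add: AL5)
    qed
    have "is_aut_LM M h'" unfolding is_aut_LM_def using H'.h_bij H'.true_hom[OF T] by blast
    thus ?thesis unfolding h'_def ..
  qed
qed

lemma aut_struct: assumes f: "is_aut_LM M f"
  shows "\<forall>x\<in>carrier M. f (klein_one, x) = (klein_one, snd (f (klein_one, x)))"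
    and "\<And>A x. A \<noteq> klein_one \<Longrightarrow> x \<in> carrier M \<Longrightarrow>
        f (A, x) = (fst (f (A, \<one>)), snd (f (A, \<one>)) \<otimes> snd (f (klein_one, x))) \<and>
        fst (f (A, \<one>)) \<noteq> klein_one \<and>
        snd (f (A, \<one>)) \<otimes> snd (f (A, \<one>)) = \<one>"
proof -
  interpret H: HA M m f by unfold_locales (rule aut_half[OF f])
  have fm: "\<And>P Q. P \<in> L \<Longrightarrow> Q \<in> L \<Longrightarrow> f (mul P Q) = mul (f P) (f Q)"
    using f by (simp add: is_aut_LM_def)
  show "\<forall>x\<in>carrier M. f (klein_one, x) = (klein_one, snd (f (klein_one, x)))"
    using H.hN by (simp add: H.phi_def)
  have fA: "f (A, x) = (H.sig A, H.tt A \<otimes> H.phi x)" if A: "A \<noteq> klein_one" and x: "x \<in> carrier M" for A x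
  proof -
    have "mul (A, \<one>) (klein_one, x) = (A, x)" using x by simp
    hence "f (A, x) = mul (f (A, \<one>)) (f (klein_one, x))" using fm[of "(A, \<one>)" "(klein_one, x)"] x by simp
    hence "f (A, x) = mul (f (A, \<one>)) (klein_one, H.phi x)" using H.hN[OF x] by simp
    thus ?thesis by (simp add: LM_mult_def H.sig_def H.tt_def)
  qed
  fix A x assume A: "A \<noteq> klein_one" and x: "x \<in> carrier M"
  obtain B where B: "B \<noteq> klein_one" "B \<noteq> A" using exists_other[OF A] by blast
  define C where "C = klein_mult A B"
  have C: "C \<noteq> klein_one" using B by (auto simp: C_def)
  have AC: "klein_mult A C = B" by (simp add: C_def)
  have f1: "f (Y, \<one>) = (H.sig Y, H.tt Y)" for Y by (simp add: H.sig_def H.tt_def)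
  have "f (mul (A, \<one>) (B, \<one>)) = mul (f (A, \<one>)) (f (B, \<one>))" by (rule fm) auto
  hence e1: "H.tt C = inv (H.tt A) \<otimes> H.tt B" using B H.sig_ne[OF B(1)] by (simp add: f1 C_def)
  have "f (mul (A, \<one>) (C, \<one>)) = mul (f (A, \<one>)) (f (C, \<one>))" by (rule fm) auto
  hence e2: "H.tt B = inv (H.tt A) \<otimes> H.tt C" using C H.sig_ne[OF C] AC by (simp add: f1)
  have "H.tt B = inv (H.tt A) \<otimes> (inv (H.tt A) \<otimes> H.tt B)" using e2 unfolding e1 .
  hence "H.tt A \<otimes> H.tt A = \<one>" by (rule AL4[OF H.tt_in H.tt_in])
  thus "f (A, x) = (fst (f (A, \<one>)), snd (f (A, \<one>)) \<otimes> snd (f (klein_one, x))) \<and>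
        fst (f (A, \<one>)) \<noteq> klein_one \<and> snd (f (A, \<one>)) \<otimes> snd (f (A, \<one>)) = \<one>"
    using fA[OF A x] H.sig_ne[OF A] by (simp add: H.sig_def H.tt_def H.phi_def)
qed

lemma aut_comm: assumes f: "is_aut_LM M f" and P: "P \<in> L"
  shows "f (gmap P) = gmap (f P)"
proof -
  obtain A x where Px: "P = (A, x)" by fastforce
  have x: "x \<in> carrier M" using P Px by simp
  have fL: "\<And>Q. Q \<in> L \<Longrightarrow> f Q \<in> L" using f by (meson bij_betwE is_aut_LM_def)
  have fN: "\<And>z. z \<in> carrier M \<Longrightarrow> f (klein_one, z) = (klein_one, snd (f (klein_one, z)))"
    using aut_struct(1)[OF f] by blast
  have fNin: "\<And>z. z \<in> carrier M \<Longrightarrow> snd (f (klein_one, z)) \<in> carrier M"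
    using fL by simp
  have fNinv: "snd (f (klein_one, inv x)) = inv (snd (f (klein_one, x)))"
  proof -
    interpret H: HA M m f by unfold_locales (rule aut_half[OF f])
    show ?thesis using H.phi_inv[OF x] by (simp add: H.phi_def)
  qed
  show ?thesis
  proof (cases "A = klein_one")
    case True
    define y where "y = snd (f (klein_one, x))"
    have fy: "f (klein_one, x) = (klein_one, y)" using fN[OF x] unfolding y_def .
    have y: "y \<in> carrier M" using fNin[OF x] unfolding y_def .
    show ?thesis using Px x True by (simp add: g_pair fy y)
  next
    case A: False
    define t where "t = snd (f (A, \<one>))"
    define s0 where "s0 = fst (f (A, \<one>))"
    define p where "p = snd (f (klein_one, x))"
    have s: "f (A, inv x) = (s0, t \<otimes> inv p)"
      using aut_struct(2)[OF f A inv_closed[OF x]] fNinv unfolding t_def s0_def p_def by simp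
    have s2: "f (A, x) = (s0, t \<otimes> p)" and ne: "s0 \<noteq> klein_one" and tt: "t \<otimes> t = \<one>"
      using aut_struct(2)[OF f A x] unfolding t_def s0_def p_def by auto
    have tin: "t \<in> carrier M" using fL[of "(A, \<one>)"] unfolding t_def by simp
    have pin: "p \<in> carrier M" using fNin[OF x] unfolding p_def .
    have ti: "inv t = t" using tt tin by (metis inv_equality)
    have "gmap (f (A, x)) = (s0, inv (t \<otimes> p))" unfolding s2 using ne tin pin by (simp add: g_pair)
    also have "inv (t \<otimes> p) = t \<otimes> inv p" using tin pin ti by (simp add: inv_mult m_comm)
    finally have "gmap (f (A, x)) = (s0, t \<otimes> inv p)" .
    moreover have "f (gmap (A, x)) = (s0, t \<otimes> inv p)" using x A s by (simp add: g_pair)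
    ultimately show ?thesis using Px by simp
  qed
qed

lemma excl: assumes f: "is_aut_LM M f" and gf: "is_aut_LM M (compose L gmap f)"
  shows False
proof -
  have bf: "bij_betw f L L" using f by (simp add: is_aut_LM_def)
  have ghom: "gmap (mul R S) = mul (gmap R) (gmap S)" if R: "R \<in> L" and S: "S \<in> L" for R S
  proof -
    have im: "f ` L = L" using bij_betw_imp_surj_on[OF bf] .
    obtain P where P: "P \<in> L" "f P = R" using R im by (metis imageE)
    obtain Q where Q: "Q \<in> L" "f Q = S" using S im by (metis imageE)
    have fh: "\<forall>P\<in>L. \<forall>Q\<in>L. f (mul P Q) = mul (f P) (f Q)" using f unfolding is_aut_LM_def by blast
    have gfh: "\<forall>P\<in>L. \<forall>Q\<in>L. compose L gmap f (mul P Q) = mul (compose L gmap f P) (compose L gmap f Q)"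
      using gf unfolding is_aut_LM_def by blast
    have "f (mul P Q) = mul (f P) (f Q)" using fh P(1) Q(1) by blast
    hence "mul R S = f (mul P Q)" using P(2) Q(2) by simp
    hence "gmap (mul R S) = gmap (f (mul P Q))" by simp
    also have "\<dots> = compose L gmap f (mul P Q)" using mul_in[OF P(1) Q(1)] by (simp add: compose_eq)
    also have "\<dots> = mul (compose L gmap f P) (compose L gmap f Q)" using gfh P(1) Q(1) by blast
    also have "compose L gmap f P = gmap R" using P by (simp add: compose_eq)
    also have "compose L gmap f Q = gmap S" using Q by (simp add: compose_eq)
    finally show ?thesis .
  qed
  define A0 where "A0 = (True, False)"
  have A0: "A0 \<noteq> klein_one" by (simp add: A0_def klein_one_def)
  have "gmap (mul (A0, m) (A0, \<one>)) = mul (gmap (A0, m)) (gmap (A0, \<one>))" by (rule ghom) (simp_all add: m_in)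
  hence "inv m = m" using A0 m_in by (simp add: g_pair)
  hence "m \<otimes> m = \<one>" using m_in by (metis r_inv)
  thus False using m_big by simp
qed

end



context LMc begin

abbreviation "HC \<equiv> carrier (Half_LM M)"
abbreviation "AC \<equiv> carrier (Aut_LM M)"

lemma HC_iff: "f \<in> HC \<longleftrightarrow> f \<in> extensional L \<and> is_half_aut_LM M f"
  by (simp add: Half_LM_def)
lemma AC_iff: "f \<in> AC \<longleftrightarrow> f \<in> extensional L \<and> is_aut_LM M f"
  by (simp add: Aut_LM_def)

lemma AC_HC: "f \<in> AC \<Longrightarrow> f \<in> HC"
  using aut_half by (simp add: HC_iff AC_iff)

lemma HC_fun: "f \<in> HC \<Longrightarrow> P \<in> L \<Longrightarrow> f P \<in> L"
  by (metis HC_iff bij_betwE is_half_aut_LM_def)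

lemma gg: assumes "f \<in> HC" shows "compose L gmap (compose L gmap f) = f"
proof (rule extensionalityI)
  show "compose L gmap (compose L gmap f) \<in> extensional L" by simp
  show "f \<in> extensional L" using assms by (simp add: HC_iff)
  fix P assume P: "P \<in> L"
  show "compose L gmap (compose L gmap f) P = f P"
    using P HC_fun[OF assms P] by (simp add: compose_eq g_g)
qed

lemma gH: "f \<in> HC \<Longrightarrow> compose L gmap f \<in> HC"
  using half_comp[OF g_half] by (simp add: HC_iff)

lemma F2: "h \<in> HC \<Longrightarrow> h \<notin> AC \<Longrightarrow> compose L gmap h \<in> AC"
  using dichot by (auto simp: HC_iff AC_iff)

lemma F3: "f \<in> AC \<Longrightarrow> compose L gmap f \<notin> AC"
proof
  assume f: "f \<in> AC" and gf: "compose L gmap f \<in> AC"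
  have "compose L gmap (compose L gmap f) = f" using gg AC_HC[OF f] by blast
  hence "is_aut_LM M (compose L gmap (compose L gmap f))" using f by (simp add: AC_iff)
  thus False using excl gf by (auto simp: AC_iff)
qed

lemma AC_comp: "f \<in> AC \<Longrightarrow> g \<in> AC \<Longrightarrow> compose L f g \<in> AC"
  using aut_comp by (simp add: AC_iff)

lemma comm_pt: "f \<in> AC \<Longrightarrow> P \<in> L \<Longrightarrow> f (gmap P) = gmap (f P)"
  using aut_comm by (simp add: AC_iff)

definition "Phi h = (if h \<in> AC then (0::int, h) else (1, compose L gmap h))"

lemma C2_carrier: "carrier C2 = {0, 1}"
  by (auto simp: C2_def carrier_integer_mod_group)

lemma C2_mult: "x \<otimes>\<^bsub>C2\<^esub> y = (x + y) mod 2"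
  by (simp add: C2_def)

lemma Phi_in: "h \<in> HC \<Longrightarrow> Phi h \<in> carrier (C2 \<times>\<times> Aut_LM M)"
  using F2 by (auto simp: Phi_def DirProd_def C2_carrier)

lemma Phi_hom: assumes h1: "h1 \<in> HC" and h2: "h2 \<in> HC"
  shows "Phi (h1 \<otimes>\<^bsub>Half_LM M\<^esub> h2) = Phi h1 \<otimes>\<^bsub>C2 \<times>\<times> Aut_LM M\<^esub> Phi h2"
proof -
  have mH: "h1 \<otimes>\<^bsub>Half_LM M\<^esub> h2 = compose L h1 h2" by (simp add: Half_LM_def)
  have mA: "\<And>f g. f \<otimes>\<^bsub>Aut_LM M\<^esub> g = compose L f g" by (simp add: Aut_LM_def)
  have mP: "\<And>a f b g. (a, f) \<otimes>\<^bsub>C2 \<times>\<times> Aut_LM M\<^esub> (b, g) = ((a + b) mod 2, compose L f g)"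
    by (simp add: DirProd_def C2_mult mA)
  have f1L: "\<And>P. P \<in> L \<Longrightarrow> h1 P \<in> L" and f2L: "\<And>P. P \<in> L \<Longrightarrow> h2 P \<in> L"
    using HC_fun h1 h2 by auto
  show ?thesis
  proof (cases "h1 \<in> AC")
    case A1: True
    show ?thesis
    proof (cases "h2 \<in> AC")
      case True
      thus ?thesis using A1 AC_comp by (simp add: Phi_def mH mP C2_mult mA)
    next
      case False
      define Gp0 where "Gp0 = compose L gmap h2"
      have Gp0: "Gp0 \<in> AC" using F2[OF h2 False] by (simp add: Gp0_def)
      have eq: "compose L gmap (compose L h1 h2) = compose L h1 Gp0"
      proof (rule extensionalityI)
        fix P assume P: "P \<in> L"
        show "compose L gmap (compose L h1 h2) P = compose L h1 Gp0 P"
          using P f2L[OF P] comm_pt[OF A1 f2L[OF P]] by (simp add: compose_eq Gp0_def)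
      qed simp_all
      have n: "compose L h1 h2 \<notin> AC"
      proof
        assume "compose L h1 h2 \<in> AC"
        moreover have "compose L gmap (compose L h1 h2) \<in> AC" using eq AC_comp[OF A1 Gp0] by simp
        ultimately show False using F3 by blast
      qed
      show ?thesis using A1 False n eq by (simp add: Phi_def mH mP C2_mult mA Gp0_def)
    qed
  next
    case N1: False
    define Gp1 where "Gp1 = compose L gmap h1"
    have Gp1: "Gp1 \<in> AC" using F2[OF h1 N1] by (simp add: Gp1_def)
    show ?thesis
    proof (cases "h2 \<in> AC")
      case A2: True
      have eq: "compose L gmap (compose L h1 h2) = compose L Gp1 h2"
      proof (rule extensionalityI)
        fix P assume P: "P \<in> L"
        show "compose L gmap (compose L h1 h2) P = compose L Gp1 h2 P"
          using P f2L[OF P] by (simp add: compose_eq Gp1_def)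
      qed simp_all
      have n: "compose L h1 h2 \<notin> AC"
      proof
        assume "compose L h1 h2 \<in> AC"
        moreover have "compose L gmap (compose L h1 h2) \<in> AC" using eq AC_comp[OF Gp1 A2] by simp
        ultimately show False using F3 by blast
      qed
      show ?thesis using N1 A2 n eq by (simp add: Phi_def mH mP C2_mult mA Gp1_def)
    next
      case N2: False
      define Gp2 where "Gp2 = compose L gmap h2"
      have Gp2: "Gp2 \<in> AC" using F2[OF h2 N2] by (simp add: Gp2_def)
      have eq: "compose L h1 h2 = compose L Gp1 Gp2"
      proof (rule extensionalityI)
        fix P assume P: "P \<in> L"
        have R: "h2 P \<in> L" using f2L[OF P] .
        have "Gp1 (gmap (h2 P)) = gmap (Gp1 (h2 P))" using comm_pt[OF Gp1 R] .
        also have "Gp1 (h2 P) = gmap (h1 (h2 P))" using R by (simp add: Gp1_def compose_eq)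
        also have "gmap (gmap (h1 (h2 P))) = h1 (h2 P)" using f1L[OF R] by (simp add: g_g)
        finally have "Gp1 (gmap (h2 P)) = h1 (h2 P)" .
        thus "compose L h1 h2 P = compose L Gp1 Gp2 P"
          using P R by (simp add: compose_eq Gp2_def)
      qed simp_all
      have "compose L h1 h2 \<in> AC" using eq AC_comp[OF Gp1 Gp2] by simp
      thus ?thesis using N1 N2 eq by (simp add: Phi_def mH mP C2_mult mA Gp1_def Gp2_def)
    qed
  qed
qed

lemma Phi_inj: "inj_on Phi HC"
proof (rule inj_onI)
  fix h1 h2 assume h1: "h1 \<in> HC" and h2: "h2 \<in> HC" and e: "Phi h1 = Phi h2"
  show "h1 = h2"
  proof (cases "h1 \<in> AC")
    case True
    thus ?thesis using e by (simp add: Phi_def split: if_splits)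
  next
    case False
    hence "h2 \<notin> AC" and "compose L gmap h1 = compose L gmap h2" using e by (simp_all add: Phi_def split: if_splits)
    hence "compose L gmap (compose L gmap h1) = compose L gmap (compose L gmap h2)" by simp
    thus ?thesis using gg[OF h1] gg[OF h2] by simp
  qed
qed

lemma Phi_surj: "Phi ` HC = carrier (C2 \<times>\<times> Aut_LM M)"
proof
  show "Phi ` HC \<subseteq> carrier (C2 \<times>\<times> Aut_LM M)" using Phi_in by blast
  show "carrier (C2 \<times>\<times> Aut_LM M) \<subseteq> Phi ` HC"
  proof
    fix z assume "z \<in> carrier (C2 \<times>\<times> Aut_LM M)"
    then obtain k f where z: "z = (k, f)" and k: "k = 0 \<or> k = 1" and f: "f \<in> AC"
      by (auto simp: DirProd_def C2_carrier)
    show "z \<in> Phi ` HC"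
    proof (cases "k = 0")
      case True
      hence "Phi f = z" using z f by (simp add: Phi_def)
      thus ?thesis using AC_HC[OF f] by blast
    next
      case False
      hence k1: "k = 1" using k by blast
      have "Phi (compose L gmap f) = (1, compose L gmap (compose L gmap f))"
        using F3[OF f] by (simp add: Phi_def)
      also have "\<dots> = z" using gg[OF AC_HC[OF f]] z k1 by simp
      finally show ?thesis using gH[OF AC_HC[OF f]] by blast
    qed
  qed
qed

theorem main_iso: "Half_LM M \<cong> C2 \<times>\<times> Aut_LM M"
proof (rule is_isoI)
  show "Phi \<in> iso (Half_LM M) (C2 \<times>\<times> Aut_LM M)"
  proof (rule isoI)
    show "Phi \<in> hom (Half_LM M) (C2 \<times>\<times> Aut_LM M)"
      using Phi_in Phi_hom by (intro homI) auto
    show "bij_betw Phi HC (carrier (C2 \<times>\<times> Aut_LM M))"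
      using Phi_inj Phi_surj by (simp add: bij_betw_def)
  qed
qed

end

lemma exists_big:
  assumes "comm_group M" and "group_exponent M > 2"
  shows "\<exists>m\<in>carrier M. m \<otimes>\<^bsub>M\<^esub> m \<noteq> \<one>\<^bsub>M\<^esub>"
proof (rule ccontr)
  interpret comm_group M by fact
  assume "\<not> ?thesis"
  hence all: "\<forall>x\<in>carrier M. x [^]\<^bsub>M\<^esub> (2::nat) = \<one>\<^bsub>M\<^esub>"
    by (auto simp: numeral_2_eq_2)
  have "group_exponent M \<le> 2"
    unfolding group_exponent_def by (rule Least_le) (use all in simp)
  thus False using assms(2) by simp
qed

theorem corollary5p4:
  fixes M :: "('a, 'b) monoid_scheme"
  assumes "comm_group M"
    and "finite (carrier M)"
    and "group_exponent M > 2"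
  shows "Half_LM M \<cong> C2 \<times>\<times> Aut_LM M"
proof -
  obtain m where m: "m \<in> carrier M" "m \<otimes>\<^bsub>M\<^esub> m \<noteq> \<one>\<^bsub>M\<^esub>"
    using exists_big[OF assms(1,3)] by blast
  interpret LMc M m
    using assms(1,2) m by (simp add: LMc_def LMc_axioms_def)
  show ?thesis by (rule main_iso)
qed


end
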